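(* Let $A=\{a_1,a_2,a_3,a_4\}$ (discrete) and give $\vec X$ the structure $\iota(a_1)=(0)_1$, $\iota(a_2)=(0)_2$, $\iota(a_3)=(1)_1$, $\iota(a_4)=(1)_2$. Then for every map $\iota_{\vec I}\colon A\to\vec I$ (the four image points not necessarily distinct), $(\vec X,\iota)$ is not dihomotopy equivalent to $(\vec I,\iota_{\vec I})$ in $A$-Posp.
   Context: A pospace is a topological space $U$ with a partial order that is a closed subset of $U\times U$; a dimap is a continuous order-preserving map; products carry the componentwise order. $\vec I=[0,1]$ with its usual order. $\vec X$ is the quotient of two copies $\vec I_1,\vec I_2$ of $\vec I$ obtained by identifying $(1/2)_1$ with $(1/2)_2$, ordered by: $(s)_i\le(t)_j$ iff either $i=j$ and $s\le t$, or $s\le1/2\le t$. Fix a pospace $A$. The category $A$-Posp has objects dimaps $\iota_B\colon A\to B$ and morphisms dimaps $f\colon B\to C$ with $f\circ\iota_B=\iota_C$. For morphisms $f,g\colon B\to C$ in $A$-Posp, a dihomotopy from $f$ to $g$ is a dimap $\phi\colon B\times\vec I\to C$ with $\phi(\cdot,0)=f$, $\phi(\cdot,1)=g$ and $\phi(\iota_B(a),t)=\iota_C(a)$ for all $a\in A$, $t$. Write $f\simeq g$ if there is a finite zigzag of such dihomotopies. A morphism $f\colon B\to C$ in $A$-Posp is a dihomotopy equivalence if there is a morphism $g\colon C\to B$ in $A$-Posp with $g\circ f\simeq\mathrm{Id}_B$ and $f\circ g\simeq\mathrm{Id}_C$. *)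

theory Defs
  imports "HOL-Analysis.Analysis"
begin

record 'a pos =
  ptop :: "'a topology"
  pord :: "'a \<Rightarrow> 'a \<Rightarrow> bool"

definition pospace :: "'a pos \<Rightarrow> bool" where
  "pospace U \<longleftrightarrow>
     partial_order_on (topspace (ptop U))
       {(x, y). x \<in> topspace (ptop U) \<and> y \<in> topspace (ptop U) \<and> pord U x y} \<and>
     closedin (prod_topology (ptop U) (ptop U))
       {(x, y). x \<in> topspace (ptop U) \<and> y \<in> topspace (ptop U) \<and> pord U x y}"

definition dimap :: "'a pos \<Rightarrow> 'b pos \<Rightarrow> ('a \<Rightarrow> 'b) \<Rightarrow> bool" where
  "dimap U V f \<longleftrightarrow> continuous_map (ptop U) (ptop V) f \<and>
     (\<forall>x\<in>topspace (ptop U). \<forall>y\<in>topspace (ptop U). pord U x y \<longrightarrow> pord V (f x) (f y))"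

definition pos_prod :: "'a pos \<Rightarrow> 'b pos \<Rightarrow> ('a \<times> 'b) pos" where
  "pos_prod U V = \<lparr> ptop = prod_topology (ptop U) (ptop V),
                    pord = (\<lambda>(x, s) (y, t). pord U x y \<and> pord V s t) \<rparr>"

definition dI :: "real pos" where
  "dI = \<lparr> ptop = top_of_set {0..1}, pord = (\<le>) \<rparr>"

definition Amorph :: "'a pos \<Rightarrow> 'b pos \<Rightarrow> ('a \<Rightarrow> 'b) \<Rightarrow> 'c pos \<Rightarrow> ('a \<Rightarrow> 'c)
                       \<Rightarrow> ('b \<Rightarrow> 'c) \<Rightarrow> bool" where
  "Amorph A B iB C iC f \<longleftrightarrow> dimap B C f \<and> (\<forall>a\<in>topspace (ptop A). f (iB a) = iC a)"

definition dihomotopy :: "'a pos \<Rightarrow> 'b pos \<Rightarrow> ('a \<Rightarrow> 'b) \<Rightarrow> 'c pos \<Rightarrow> ('a \<Rightarrow> 'c)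
                       \<Rightarrow> ('b \<Rightarrow> 'c) \<Rightarrow> ('b \<Rightarrow> 'c) \<Rightarrow> ('b \<times> real \<Rightarrow> 'c) \<Rightarrow> bool" where
  "dihomotopy A B iB C iC f g \<phi> \<longleftrightarrow>
     Amorph A B iB C iC f \<and> Amorph A B iB C iC g \<and>
     dimap (pos_prod B dI) C \<phi> \<and>
     (\<forall>x\<in>topspace (ptop B). \<phi> (x, 0) = f x \<and> \<phi> (x, 1) = g x) \<and>
     (\<forall>a\<in>topspace (ptop A). \<forall>t\<in>{0..1}. \<phi> (iB a, t) = iC a)"

definition dihomotopic1 :: "'a pos \<Rightarrow> 'b pos \<Rightarrow> ('a \<Rightarrow> 'b) \<Rightarrow> 'c pos \<Rightarrow> ('a \<Rightarrow> 'c)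
                       \<Rightarrow> ('b \<Rightarrow> 'c) \<Rightarrow> ('b \<Rightarrow> 'c) \<Rightarrow> bool" where
  "dihomotopic1 A B iB C iC f g \<longleftrightarrow> (\<exists>\<phi>. dihomotopy A B iB C iC f g \<phi>)"

text \<open>Finite zigzags of dihomotopies (the equivalence relation generated; reflexivity
  on morphisms is witnessed by constant dihomotopies).\<close>
definition dihomotopic :: "'a pos \<Rightarrow> 'b pos \<Rightarrow> ('a \<Rightarrow> 'b) \<Rightarrow> 'c pos \<Rightarrow> ('a \<Rightarrow> 'c)
                       \<Rightarrow> ('b \<Rightarrow> 'c) \<Rightarrow> ('b \<Rightarrow> 'c) \<Rightarrow> bool" where
  "dihomotopic A B iB C iC f g \<longleftrightarrow>
     (\<lambda>h k. dihomotopic1 A B iB C iC h k \<or> dihomotopic1 A B iB C iC k h)\<^sup>*\<^sup>* f g"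

definition dihomotopy_equivalent :: "'a pos \<Rightarrow> 'b pos \<Rightarrow> ('a \<Rightarrow> 'b) \<Rightarrow> 'c pos
                       \<Rightarrow> ('a \<Rightarrow> 'c) \<Rightarrow> bool" where
  "dihomotopy_equivalent A B iB C iC \<longleftrightarrow>
     (\<exists>f g. Amorph A B iB C iC f \<and> Amorph A C iC B iB g \<and>
            dihomotopic A B iB B iB (g \<circ> f) id \<and>
            dihomotopic A C iC C iC (f \<circ> g) id)"

text \<open>The pospace X: two copies of [0,1] (points (i,s), i in {1,2}) glued at 1/2,
  carrying the quotient topology. Canonical representative of the glued point: (1,1/2).\<close>
definition X_pre :: "(nat \<times> real) topology" where
  "X_pre = prod_topology (discrete_topology {1, 2}) (top_of_set {0..1})"

definition X_quot :: "nat \<times> real \<Rightarrow> nat \<times> real" where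
  "X_quot p = (if snd p = 1/2 then (1, 1/2) else p)"

definition X_carrier :: "(nat \<times> real) set" where
  "X_carrier = X_quot ` topspace X_pre"

definition X_top :: "(nat \<times> real) topology" where
  "X_top = topology (\<lambda>U. U \<subseteq> X_carrier \<and> openin X_pre {p \<in> topspace X_pre. X_quot p \<in> U})"

definition X_ord :: "nat \<times> real \<Rightarrow> nat \<times> real \<Rightarrow> bool" where
  "X_ord p q \<longleftrightarrow> (fst p = fst q \<and> snd p \<le> snd q) \<or> (snd p \<le> 1/2 \<and> 1/2 \<le> snd q)"

definition dX :: "(nat \<times> real) pos" where
  "dX = \<lparr> ptop = X_top, pord = X_ord \<rparr>"

text \<open>The discrete pospace A = {a1,a2,a3,a4}, encoded as {1,2,3,4}.\<close>
definition A4 :: "nat pos" where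
  "A4 = \<lparr> ptop = discrete_topology {1, 2, 3, 4}, pord = (=) \<rparr>"

definition iota_X :: "nat \<Rightarrow> nat \<times> real" where
  "iota_X a = (if a = 1 then (1, 0) else if a = 2 then (2, 0) else if a = 3 then (1, 1) else (2, 1))"

end

theory Submission
  imports Defs
begin

theorem mainTheorem8:
  fixes iota_I :: "nat \<Rightarrow> real"
  assumes "dimap A4 dI iota_I"
  shows "\<not> dihomotopy_equivalent A4 dX iota_X dI iota_I"
proof
  assume "dihomotopy_equivalent A4 dX iota_X dI iota_I"
  then obtain g where g: "Amorph A4 dI iota_I dX iota_X g"
    unfolding dihomotopy_equivalent_def by blast
  have tA: "topspace (ptop A4) = {1,2,3,4}" by (simp add: A4_def)
  have tI: "topspace (ptop dI) = {0..1}" by (simp add: dI_def)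
  have cm: "continuous_map (ptop A4) (ptop dI) iota_I"
    using assms by (simp add: dimap_def)
  have x: "iota_I 1 \<in> {0..1}" and y: "iota_I 2 \<in> {0..1}"
    using continuous_map_image_subset_topspace[OF cm] tA tI by auto
  have g1: "g (iota_I 1) = (1, 0)" and g2: "g (iota_I 2) = (2, 0)"
    using g tA by (auto simp: Amorph_def iota_X_def)
  have mono: "\<And>u v. u \<in> {0..1} \<Longrightarrow> v \<in> {0..1} \<Longrightarrow> u \<le> v \<Longrightarrow> X_ord (g u) (g v)"
    using g tI by (auto simp: Amorph_def dimap_def dI_def dX_def)
  show False
  proof (cases "iota_I 1 \<le> iota_I 2")
    case True
    then have "X_ord (g (iota_I 1)) (g (iota_I 2))" using mono x y by blast
    then show False using g1 g2 by (simp add: X_ord_def)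
  next
    case False
    then have "X_ord (g (iota_I 2)) (g (iota_I 1))" using mono x y by simp
    then show False using g1 g2 by (simp add: X_ord_def)
  qed
qed

end
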